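(* Let $\lambda\in P_I^+$ and $\mu\in P$ with $\mu_+=\lambda_+$. If $\mu<_\emptyset\lambda$, then $\mu_{I,+}<_\emptyset\lambda$.
   Context: Let $\mathfrak a$ be a Euclidean space with inner product $(\cdot,\cdot)$, $R\subset\mathfrak a^*$ a root system with Weyl group $W$, positive roots $R^+$, simple roots $\Pi$, simple reflections $S$, Bruhat order $\le_W$. Let $P$ be the weight lattice and $P^+$ the dominant weights. For $\lambda\in P$ let $\lambda_+$ be the unique element of $W\lambda\cap P^+$ and $\overline v(\lambda)$ the minimal length element of $W$ with $\overline v(\lambda)\lambda_+=\lambda$. Write $\lambda\preceq\mu$ iff $\mu-\lambda\in\sum_{\alpha\in\Pi}\mathbb Z_{\ge0}\alpha$, and define $\lambda\le_\emptyset\mu$ iff $\lambda_+\preceq\mu_+$ and, in case $\lambda_+=\mu_+$, $\overline v(\lambda)\le_W\overline v(\mu)$; $<_\emptyset$ denotes the strict version. Let $I\subset S$, $W_I$ the parabolic subgroup generated by $I$, $R_I^+$ its positive roots, $P_I^+=\{\lambda\in P:(\lambda,\alpha)\ge0\ \forall\alpha\in R_I^+\}$, and for $\mu\in P$ let $\mu_{I,+}$ be the unique element of $W_I\mu\cap P_I^+$. *)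

theory Defs
  imports "HOL-Analysis.Analysis"
begin

text \<open>The Euclidean space a is a type of class euclidean_space; the dual a* is
identified with a via the inner product.\<close>

definition rfl :: "'a::euclidean_space \<Rightarrow> 'a \<Rightarrow> 'a" where
  "rfl \<alpha> x = x - (2 * (x \<bullet> \<alpha>) / (\<alpha> \<bullet> \<alpha>)) *\<^sub>R \<alpha>"

definition root_system :: "'a::euclidean_space set \<Rightarrow> bool" where
  "root_system R \<longleftrightarrow> finite R \<and> 0 \<notin> R \<and> span R = UNIV \<and>
     (\<forall>\<alpha>\<in>R. rfl \<alpha> ` R = R) \<and>
     (\<forall>\<alpha>\<in>R. \<forall>\<beta>\<in>R. 2 * (\<beta> \<bullet> \<alpha>) / (\<alpha> \<bullet> \<alpha>) \<in> \<int>)"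

definition nn_comb :: "'a::euclidean_space set \<Rightarrow> 'a \<Rightarrow> bool" where
  "nn_comb Sr x \<longleftrightarrow> (\<exists>c::'a \<Rightarrow> nat. x = (\<Sum>\<alpha>\<in>Sr. real (c \<alpha>) *\<^sub>R \<alpha>))"

definition is_base :: "'a::euclidean_space set \<Rightarrow> 'a set \<Rightarrow> bool" where
  "is_base R Sr \<longleftrightarrow> Sr \<subseteq> R \<and> independent Sr \<and>
     (\<forall>\<beta>\<in>R. nn_comb Sr \<beta> \<or> nn_comb Sr (- \<beta>))"

definition pos_roots :: "'a::euclidean_space set \<Rightarrow> 'a set \<Rightarrow> 'a set" where
  "pos_roots R Sr = {\<beta>\<in>R. nn_comb Sr \<beta>}"

text \<open>Group generated by a set of maps (all of them involutions here).\<close>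
inductive_set gen_by :: "('a \<Rightarrow> 'a) set \<Rightarrow> ('a \<Rightarrow> 'a) set" for T where
  gen_id: "id \<in> gen_by T"
| gen_step: "t \<in> T \<Longrightarrow> w \<in> gen_by T \<Longrightarrow> t \<circ> w \<in> gen_by T"

definition weyl :: "'a::euclidean_space set \<Rightarrow> ('a \<Rightarrow> 'a) set" where
  "weyl R = gen_by (rfl ` R)"

definition simple_refls :: "'a::euclidean_space set \<Rightarrow> ('a \<Rightarrow> 'a) set" where
  "simple_refls Sr = rfl ` Sr"

definition word_len :: "('a \<Rightarrow> 'a) set \<Rightarrow> ('a \<Rightarrow> 'a) \<Rightarrow> nat" where
  "word_len S w = (LEAST n. \<exists>ts. set ts \<subseteq> S \<and> length ts = n \<and> w = foldr (\<circ>) ts id)"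

definition bruhat_step :: "'a::euclidean_space set \<Rightarrow> 'a set \<Rightarrow> ('a \<Rightarrow> 'a) \<Rightarrow> ('a \<Rightarrow> 'a) \<Rightarrow> bool" where
  "bruhat_step R Sr u w \<longleftrightarrow> u \<in> weyl R \<and> w \<in> weyl R \<and>
     (\<exists>\<alpha>\<in>R. w = rfl \<alpha> \<circ> u) \<and>
     word_len (simple_refls Sr) u < word_len (simple_refls Sr) w"

definition bruhat_le :: "'a::euclidean_space set \<Rightarrow> 'a set \<Rightarrow> ('a \<Rightarrow> 'a) \<Rightarrow> ('a \<Rightarrow> 'a) \<Rightarrow> bool" where
  "bruhat_le R Sr = (bruhat_step R Sr)\<^sup>*\<^sup>*"

definition weight_lattice :: "'a::euclidean_space set \<Rightarrow> 'a set" where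
  "weight_lattice R = {x. \<forall>\<alpha>\<in>R. 2 * (x \<bullet> \<alpha>) / (\<alpha> \<bullet> \<alpha>) \<in> \<int>}"

definition dominant :: "'a::euclidean_space set \<Rightarrow> 'a set \<Rightarrow> 'a set" where
  "dominant R Sr = {x \<in> weight_lattice R. \<forall>\<alpha>\<in>pos_roots R Sr. x \<bullet> \<alpha> \<ge> 0}"

text \<open>lambda_+ : the unique dominant element of the W-orbit.\<close>
definition dom_rep :: "'a::euclidean_space set \<Rightarrow> 'a set \<Rightarrow> 'a \<Rightarrow> 'a" where
  "dom_rep R Sr x = (THE y. y \<in> dominant R Sr \<and> (\<exists>w\<in>weyl R. w x = y))"

definition vbar :: "'a::euclidean_space set \<Rightarrow> 'a set \<Rightarrow> 'a \<Rightarrow> ('a \<Rightarrow> 'a)" where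
  "vbar R Sr x = (THE w. w \<in> weyl R \<and> w (dom_rep R Sr x) = x \<and>
      (\<forall>w'\<in>weyl R. w' (dom_rep R Sr x) = x \<longrightarrow>
          word_len (simple_refls Sr) w \<le> word_len (simple_refls Sr) w'))"

definition dom_order :: "'a::euclidean_space set \<Rightarrow> 'a \<Rightarrow> 'a \<Rightarrow> bool" where
  "dom_order Sr x y \<longleftrightarrow> nn_comb Sr (y - x)"

definition le_empty :: "'a::euclidean_space set \<Rightarrow> 'a set \<Rightarrow> 'a \<Rightarrow> 'a \<Rightarrow> bool" where
  "le_empty R Sr x y \<longleftrightarrow> dom_order Sr (dom_rep R Sr x) (dom_rep R Sr y) \<and>
     (dom_rep R Sr x = dom_rep R Sr y \<longrightarrow> bruhat_le R Sr (vbar R Sr x) (vbar R Sr y))"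

definition less_empty :: "'a::euclidean_space set \<Rightarrow> 'a set \<Rightarrow> 'a \<Rightarrow> 'a \<Rightarrow> bool" where
  "less_empty R Sr x y \<longleftrightarrow> le_empty R Sr x y \<and> x \<noteq> y"

definition par_simple :: "'a::euclidean_space set \<Rightarrow> ('a \<Rightarrow> 'a) set \<Rightarrow> 'a set" where
  "par_simple Sr I = {\<alpha>\<in>Sr. rfl \<alpha> \<in> I}"

definition par_pos_roots :: "'a::euclidean_space set \<Rightarrow> 'a set \<Rightarrow> ('a \<Rightarrow> 'a) set \<Rightarrow> 'a set" where
  "par_pos_roots R Sr I = {\<beta>\<in>R. nn_comb (par_simple Sr I) \<beta>}"

definition par_weyl :: "('a \<Rightarrow> 'a) set \<Rightarrow> ('a \<Rightarrow> 'a) set" where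
  "par_weyl I = gen_by I"

definition par_dominant :: "'a::euclidean_space set \<Rightarrow> 'a set \<Rightarrow> ('a \<Rightarrow> 'a) set \<Rightarrow> 'a set" where
  "par_dominant R Sr I = {x \<in> weight_lattice R. \<forall>\<alpha>\<in>par_pos_roots R Sr I. x \<bullet> \<alpha> \<ge> 0}"

definition par_rep :: "'a::euclidean_space set \<Rightarrow> 'a set \<Rightarrow> ('a \<Rightarrow> 'a) set \<Rightarrow> 'a \<Rightarrow> 'a" where
  "par_rep R Sr I x = (THE y. y \<in> par_dominant R Sr I \<and> (\<exists>w\<in>par_weyl I. w x = y))"

end

theory Submission
  imports Defs
begin

lemma rfl_invol: "(\<alpha>::'a::euclidean_space) \<noteq> 0 \<Longrightarrow> rfl \<alpha> (rfl \<alpha> x) = x"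
  unfolding rfl_def by (simp add: inner_diff_left algebra_simps)

lemma rfl_self: "(\<alpha>::'a::euclidean_space) \<noteq> 0 \<Longrightarrow> rfl \<alpha> \<alpha> = - \<alpha>"
  unfolding rfl_def by (simp add: algebra_simps scaleR_2)

lemma rfl_scale: "c \<noteq> 0 \<Longrightarrow> rfl (c *\<^sub>R (\<alpha>::'a::euclidean_space)) = rfl \<alpha>"
  unfolding rfl_def by (rule ext) (simp add: field_simps power2_eq_square)

lemma rfl_neg: "rfl (- (\<alpha>::'a::euclidean_space)) = rfl \<alpha>"
  using rfl_scale[of "-1" \<alpha>] by simp

lemma rfl_inner: "(\<alpha>::'a::euclidean_space) \<noteq> 0 \<Longrightarrow> rfl \<alpha> x \<bullet> rfl \<alpha> y = x \<bullet> y"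
  unfolding rfl_def by (simp add: inner_diff_left inner_diff_right inner_commute field_simps)

lemma rfl_linear: "linear (rfl (\<alpha>::'a::euclidean_space))"
  unfolding rfl_def by (rule linearI) (simp_all add: inner_add_left algebra_simps add_divide_distrib scaleR_add_left)

lemma rfl_conj:
  fixes a :: "'a::euclidean_space \<Rightarrow> 'a"
  assumes "linear a" "\<And>x y. a x \<bullet> a y = x \<bullet> y"
  shows "a (rfl \<beta> x) = rfl (a \<beta>) (a x)"
  using assms unfolding rfl_def by (simp add: linear_diff linear_scale)

lemma gen_by_gen: "t \<in> T \<Longrightarrow> t \<in> gen_by T"
  using gen_by.gen_step[OF _ gen_by.gen_id] by fastforce

lemma gen_by_comp: "u \<in> gen_by T \<Longrightarrow> w \<in> gen_by T \<Longrightarrow> u \<circ> w \<in> gen_by T"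
  by (induction u rule: gen_by.induct) (auto simp: comp_assoc intro: gen_by.intros)

lemma gen_by_mono: "w \<in> gen_by T \<Longrightarrow> T \<subseteq> T' \<Longrightarrow> w \<in> gen_by T'"
  by (induction w rule: gen_by.induct) (auto intro: gen_by.intros)

lemma gen_by_subset: "w \<in> gen_by T \<Longrightarrow> (\<And>t. t \<in> T \<Longrightarrow> t \<in> gen_by T') \<Longrightarrow> w \<in> gen_by T'"
  by (induction w rule: gen_by.induct) (auto intro: gen_by.intros gen_by_comp)

lemma fc: "foldr (\<circ>) (t # ts) id = t \<circ> foldr (\<circ>) ts id"
  by simp

lemma gen_by_word: "w \<in> gen_by T \<Longrightarrow> \<exists>ts. set ts \<subseteq> T \<and> w = foldr (\<circ>) ts id"
proof (induction w rule: gen_by.induct)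
  case gen_id
  then show ?case by (intro exI[of _ "[]"]) simp
next
  case (gen_step t w)
  then obtain ts where "set ts \<subseteq> T" "w = foldr (\<circ>) ts id" by blast
  then show ?case using gen_step by (intro exI[of _ "t # ts"]) (simp only: fc set_simps, blast)
qed

lemma word_gen_by: "set ts \<subseteq> T \<Longrightarrow> foldr (\<circ>) ts id \<in> gen_by T"
  by (induction ts) (auto simp only: fc set_simps foldr_Nil id_apply intro: gen_by.intros)

lemma gen_by_inv:
  assumes "\<And>t x. t \<in> T \<Longrightarrow> t (t x) = x" "w \<in> gen_by T"
  shows "\<exists>w'\<in>gen_by T. (\<forall>x. w' (w x) = x) \<and> (\<forall>x. w (w' x) = x)"
  using assms(2)
proof (induction w rule: gen_by.induct)
  case gen_id
  then show ?case by (intro bexI[of _ id]) (auto intro: gen_by.intros)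
next
  case (gen_step t w)
  then obtain w' where "w' \<in> gen_by T" "\<forall>x. w' (w x) = x" "\<forall>x. w (w' x) = x" by blast
  moreover have "w' \<circ> t \<in> gen_by T" using \<open>w' \<in> gen_by T\<close> gen_step(1) by (auto intro: gen_by_comp gen_by_gen)
  moreover have "\<forall>x. t (t x) = x" using gen_step(1) assms(1) by blast
  ultimately show ?case
    by (intro bexI[of _ "w' \<circ> t"]) auto
qed

lemma wl_exists:
  assumes "w \<in> gen_by T"
  shows "\<exists>ts. set ts \<subseteq> T \<and> length ts = word_len T w \<and> w = foldr (\<circ>) ts id"
proof -
  obtain ts where "set ts \<subseteq> T" "w = foldr (\<circ>) ts id" using gen_by_word[OF assms] by blast
  then have "\<exists>n ts. set ts \<subseteq> T \<and> length ts = n \<and> w = foldr (\<circ>) ts id" by blast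
  from LeastI_ex[OF this] show ?thesis unfolding word_len_def .
qed

lemma wl_le: "set ts \<subseteq> T \<Longrightarrow> word_len T (foldr (\<circ>) ts id) \<le> length ts"
  unfolding word_len_def by (rule Least_le) blast

lemma wl_cons:
  assumes "t \<in> T" "w \<in> gen_by T"
  shows "word_len T (t \<circ> w) \<le> Suc (word_len T w)"
proof -
  obtain ts where ts: "set ts \<subseteq> T" "length ts = word_len T w" "w = foldr (\<circ>) ts id"
    using wl_exists[OF assms(2)] by blast
  have "t \<circ> w = foldr (\<circ>) (t # ts) id" using ts by (simp only: fc)
  then show ?thesis using wl_le[of "t # ts" T] ts assms by simp
qed

lemma wl_0:
  assumes "w \<in> gen_by T" "word_len T w = 0"
  shows "w = id"
  using wl_exists[OF assms(1)] assms(2) by auto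


locale rs =
  fixes R Sr :: "'a::euclidean_space set"
  assumes RS: "root_system R" and BS: "is_base R Sr"
begin

lemma finR: "finite R" using RS unfolding root_system_def by blast
lemma zero_notin: "0 \<notin> R" using RS unfolding root_system_def by blast
lemma nz: "\<alpha> \<in> R \<Longrightarrow> \<alpha> \<noteq> 0" using zero_notin by blast
lemma rfl_R: "\<alpha> \<in> R \<Longrightarrow> \<beta> \<in> R \<Longrightarrow> rfl \<alpha> \<beta> \<in> R"
  using RS unfolding root_system_def by blast
lemma int_R: "\<alpha> \<in> R \<Longrightarrow> \<beta> \<in> R \<Longrightarrow> 2 * (\<beta> \<bullet> \<alpha>) / (\<alpha> \<bullet> \<alpha>) \<in> \<int>"
  using RS unfolding root_system_def by blast
lemma neg_R: "\<alpha> \<in> R \<Longrightarrow> - \<alpha> \<in> R"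
  using rfl_R[of \<alpha> \<alpha>] rfl_self nz by metis
lemma Sr_sub: "Sr \<subseteq> R" using BS unfolding is_base_def by blast
lemma indep: "independent Sr" using BS unfolding is_base_def by blast
lemma finSr: "finite Sr" using finR Sr_sub finite_subset by blast
lemma pos_or_neg: "\<beta> \<in> R \<Longrightarrow> nn_comb Sr \<beta> \<or> nn_comb Sr (- \<beta>)"
  using BS unfolding is_base_def by blast

lemma coef_unique:
  assumes "(\<Sum>\<gamma>\<in>Sr. a \<gamma> *\<^sub>R \<gamma>) = (\<Sum>\<gamma>\<in>Sr. b \<gamma> *\<^sub>R \<gamma>)" "\<gamma> \<in> Sr"
  shows "a \<gamma> = b \<gamma>"
proof -
  have S: "(\<Sum>\<gamma>\<in>Sr. (a \<gamma> - b \<gamma>) *\<^sub>R \<gamma>) = 0"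
    using assms(1) by (simp add: scaleR_diff_left sum_subtractf)
  have H: "\<forall>c. (\<Sum>v\<in>Sr. c v *\<^sub>R v) = 0 \<longrightarrow> (\<forall>v\<in>Sr. c v = 0)"
    using indep unfolding independent_explicit by blast
  have "a \<gamma> - b \<gamma> = 0" using H[rule_format, of "\<lambda>\<gamma>. a \<gamma> - b \<gamma>", OF S assms(2)] by simp
  then show ?thesis by simp
qed

lemma sum_delta_vec: "\<alpha> \<in> Sr \<Longrightarrow> (\<Sum>\<gamma>\<in>Sr. (if \<gamma> = \<alpha> then k else 0) *\<^sub>R \<gamma>) = k *\<^sub>R \<alpha>"
proof -
  assume a: "\<alpha> \<in> Sr"
  have "(\<Sum>\<gamma>\<in>Sr. (if \<gamma> = \<alpha> then k else 0) *\<^sub>R \<gamma>) = (\<Sum>\<gamma>\<in>Sr. if \<gamma> = \<alpha> then k *\<^sub>R \<gamma> else 0)"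
    by (rule sum.cong) auto
  also have "\<dots> = k *\<^sub>R \<alpha>" using a finSr by (simp add: sum.delta')
  finally show ?thesis .
qed

lemma not_pos_neg:
  assumes "\<beta> \<noteq> 0" "nn_comb Sr \<beta>" "nn_comb Sr (- \<beta>)"
  shows False
proof -
  obtain c where c: "\<beta> = (\<Sum>\<gamma>\<in>Sr. real (c \<gamma>) *\<^sub>R \<gamma>)" using assms(2) unfolding nn_comb_def by blast
  obtain d where d: "- \<beta> = (\<Sum>\<gamma>\<in>Sr. real (d \<gamma>) *\<^sub>R \<gamma>)" using assms(3) unfolding nn_comb_def by blast
  have e: "(\<Sum>\<gamma>\<in>Sr. (- real (d \<gamma>)) *\<^sub>R \<gamma>) = - (\<Sum>\<gamma>\<in>Sr. real (d \<gamma>) *\<^sub>R \<gamma>)"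
    by (simp add: sum_negf)
  have "(\<Sum>\<gamma>\<in>Sr. real (c \<gamma>) *\<^sub>R \<gamma>) = (\<Sum>\<gamma>\<in>Sr. (- real (d \<gamma>)) *\<^sub>R \<gamma>)"
    unfolding e using c d by (metis minus_minus)
  then have "\<forall>\<gamma>\<in>Sr. real (c \<gamma>) = - real (d \<gamma>)" using coef_unique[of "\<lambda>\<gamma>. real (c \<gamma>)" "\<lambda>\<gamma>. - real (d \<gamma>)"] by blast
  then have "\<forall>\<gamma>\<in>Sr. c \<gamma> = 0" by force
  then have "\<beta> = 0" using c by simp
  then show False using assms(1) by simp
qed

lemma key:
  assumes "\<alpha> \<in> Sr" "\<beta> \<in> R" "nn_comb Sr \<beta>" "nn_comb Sr (- rfl \<alpha> \<beta>)"
  shows "\<exists>c. \<beta> = c *\<^sub>R \<alpha>"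
proof -
  obtain c where c: "\<beta> = (\<Sum>\<gamma>\<in>Sr. real (c \<gamma>) *\<^sub>R \<gamma>)" using assms(3) unfolding nn_comb_def by blast
  obtain d where d: "- rfl \<alpha> \<beta> = (\<Sum>\<gamma>\<in>Sr. real (d \<gamma>) *\<^sub>R \<gamma>)" using assms(4) unfolding nn_comb_def by blast
  define k where "k = 2 * (\<beta> \<bullet> \<alpha>) / (\<alpha> \<bullet> \<alpha>)"
  have r: "rfl \<alpha> \<beta> = \<beta> - k *\<^sub>R \<alpha>" unfolding rfl_def k_def by simp
  have e1: "rfl \<alpha> \<beta> = (\<Sum>\<gamma>\<in>Sr. (real (c \<gamma>) - (if \<gamma> = \<alpha> then k else 0)) *\<^sub>R \<gamma>)"
    unfolding r using c sum_delta_vec[OF assms(1), of k]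
    by (simp add: scaleR_diff_left sum_subtractf)
  have e: "(\<Sum>\<gamma>\<in>Sr. (- real (d \<gamma>)) *\<^sub>R \<gamma>) = - (\<Sum>\<gamma>\<in>Sr. real (d \<gamma>) *\<^sub>R \<gamma>)"
    by (simp add: sum_negf)
  have "rfl \<alpha> \<beta> = (\<Sum>\<gamma>\<in>Sr. (- real (d \<gamma>)) *\<^sub>R \<gamma>)"
    unfolding e d[symmetric] by simp
  then have eq: "(\<Sum>\<gamma>\<in>Sr. (real (c \<gamma>) - (if \<gamma> = \<alpha> then k else 0)) *\<^sub>R \<gamma>) = (\<Sum>\<gamma>\<in>Sr. (- real (d \<gamma>)) *\<^sub>R \<gamma>)"
    using e1 by simp
  have "\<forall>\<gamma>\<in>Sr. real (c \<gamma>) - (if \<gamma> = \<alpha> then k else 0) = - real (d \<gamma>)"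
    using coef_unique[of "\<lambda>\<gamma>. real (c \<gamma>) - (if \<gamma> = \<alpha> then k else 0)" "\<lambda>\<gamma>. - real (d \<gamma>)", OF eq] by blast
  then have z: "\<forall>\<gamma>\<in>Sr. \<gamma> \<noteq> \<alpha> \<longrightarrow> c \<gamma> = 0" by force
  have "\<beta> = (\<Sum>\<gamma>\<in>Sr. (if \<gamma> = \<alpha> then real (c \<alpha>) else 0) *\<^sub>R \<gamma>)"
    unfolding c by (rule sum.cong) (use z in auto)
  also have "\<dots> = real (c \<alpha>) *\<^sub>R \<alpha>" by (rule sum_delta_vec[OF assms(1)])
  finally show ?thesis by blast
qed

lemma nn_simple: "\<alpha> \<in> Sr \<Longrightarrow> nn_comb Sr \<alpha>"
  unfolding nn_comb_def
  by (rule exI[of _ "\<lambda>\<gamma>. if \<gamma> = \<alpha> then 1 else 0"])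
     (use sum_delta_vec[of \<alpha> 1] in \<open>simp add: if_distrib[of real] cong: if_cong\<close>)

lemma nn_zero: "nn_comb X 0"
  unfolding nn_comb_def by (rule exI[of _ "\<lambda>_. 0"]) simp

end

context rs begin

lemma invR: "\<alpha> \<in> R \<Longrightarrow> rfl \<alpha> (rfl \<alpha> x) = x" using rfl_invol nz by blast

lemma inner_pos: "\<alpha> \<in> R \<Longrightarrow> \<alpha> \<bullet> \<alpha> > 0" using nz by simp

lemma invol_T: "X \<subseteq> R \<Longrightarrow> t \<in> rfl ` X \<Longrightarrow> t (t x) = x"
  using rfl_invol nz by blast

lemma isom_gen:
  assumes "w \<in> gen_by (rfl ` X)" "X \<subseteq> R"
  shows "linear w \<and> (\<forall>x y. w x \<bullet> w y = x \<bullet> y) \<and> (\<forall>\<beta>\<in>R. w \<beta> \<in> R) \<and>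
         (\<forall>x\<in>weight_lattice R. w x \<in> weight_lattice R)"
  using assms(1)
proof (induction w rule: gen_by.induct)
  case gen_id
  then show ?case by (simp add: linear_id[unfolded id_def])
next
  case (gen_step t w)
  then obtain \<alpha> where a: "\<alpha> \<in> R" "t = rfl \<alpha>" using assms(2) by blast
  have l: "linear (t \<circ> w)" using gen_step a rfl_linear linear_compose by blast
  have a0: "\<alpha> \<noteq> 0" using nz a(1) by blast
  have i: "\<forall>x y. (t \<circ> w) x \<bullet> (t \<circ> w) y = x \<bullet> y" using gen_step a rfl_inner[OF a0] by simp
  have r: "\<forall>\<beta>\<in>R. (t \<circ> w) \<beta> \<in> R" using gen_step a rfl_R by simp
  have wl: "\<forall>x\<in>weight_lattice R. (t \<circ> w) x \<in> weight_lattice R"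
  proof
    fix x assume "x \<in> weight_lattice R"
    then have y: "w x \<in> weight_lattice R" using gen_step by blast
    define y where "y = w x"
    have "rfl \<alpha> y \<in> weight_lattice R"
      unfolding weight_lattice_def mem_Collect_eq
    proof (intro ballI)
      fix \<beta> assume b: "\<beta> \<in> R"
      define k where "k = 2 * (y \<bullet> \<alpha>) / (\<alpha> \<bullet> \<alpha>)"
      have k: "k \<in> \<int>" using y a(1) unfolding weight_lattice_def k_def y_def by blast
      have m: "2 * (\<alpha> \<bullet> \<beta>) / (\<beta> \<bullet> \<beta>) \<in> \<int>" using int_R[OF b a(1)] .
      have yb: "2 * (y \<bullet> \<beta>) / (\<beta> \<bullet> \<beta>) \<in> \<int>" using y b unfolding weight_lattice_def y_def by blast
      have "rfl \<alpha> y \<bullet> \<beta> = y \<bullet> \<beta> - k * (\<alpha> \<bullet> \<beta>)" unfolding rfl_def k_def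
        by (simp add: inner_diff_left)
      then have eqn: "2 * (rfl \<alpha> y \<bullet> \<beta>) / (\<beta> \<bullet> \<beta>) = 2 * (y \<bullet> \<beta>) / (\<beta> \<bullet> \<beta>) - k * (2 * (\<alpha> \<bullet> \<beta>) / (\<beta> \<bullet> \<beta>))"
        using inner_pos[OF b] by (simp add: field_simps)
      have km: "k * (2 * (\<alpha> \<bullet> \<beta>) / (\<beta> \<bullet> \<beta>)) \<in> \<int>" using Ints_mult[OF k m] .
      show "2 * (rfl \<alpha> y \<bullet> \<beta>) / (\<beta> \<bullet> \<beta>) \<in> \<int>" unfolding eqn by (rule Ints_diff[OF yb km])
    qed
    then show "(t \<circ> w) x \<in> weight_lattice R" using a y_def by simp
  qed
  show ?case using l i r wl by blast
qed

lemma gen_inv: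
  assumes "w \<in> gen_by (rfl ` X)" "X \<subseteq> R"
  shows "\<exists>w'\<in>gen_by (rfl ` X). (\<forall>x. w' (w x) = x) \<and> (\<forall>x. w (w' x) = x)"
  using gen_by_inv[OF _ assms(1)] invol_T[OF assms(2)] by blast

lemma refl_in_WS_pos:
  "\<beta> \<in> R \<Longrightarrow> \<beta> = (\<Sum>\<gamma>\<in>Sr. real (c \<gamma>) *\<^sub>R \<gamma>) \<Longrightarrow> rfl \<beta> \<in> gen_by (rfl ` Sr)"
proof (induction "sum c Sr" arbitrary: \<beta> c rule: less_induct)
  case less
  have b0: "\<beta> \<noteq> 0" using less nz by blast
  have "\<beta> \<bullet> \<beta> = (\<Sum>\<gamma>\<in>Sr. real (c \<gamma>) * (\<gamma> \<bullet> \<beta>))"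
    by (subst (1) less(3)) (simp add: inner_sum_left)
  moreover have "\<beta> \<bullet> \<beta> > 0" using b0 by simp
  ultimately have "\<not> (\<forall>\<gamma>\<in>Sr. real (c \<gamma>) * (\<gamma> \<bullet> \<beta>) \<le> 0)"
  proof -
    assume A: "\<beta> \<bullet> \<beta> = (\<Sum>\<gamma>\<in>Sr. real (c \<gamma>) * (\<gamma> \<bullet> \<beta>))" "\<beta> \<bullet> \<beta> > 0"
    show ?thesis
    proof
      assume H: "\<forall>\<gamma>\<in>Sr. real (c \<gamma>) * (\<gamma> \<bullet> \<beta>) \<le> 0"
      have "(\<Sum>\<gamma>\<in>Sr. real (c \<gamma>) * (\<gamma> \<bullet> \<beta>)) \<le> 0" using H by (intro sum_nonpos) auto
      then show False using A by linarith
    qed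
  qed
  then obtain \<gamma> where g: "\<gamma> \<in> Sr" "real (c \<gamma>) * (\<gamma> \<bullet> \<beta>) > 0" by force
  have cg: "c \<gamma> > 0" using g(2) by (cases "c \<gamma> = 0") auto
  have gb: "\<gamma> \<bullet> \<beta> > 0" using g(2) by (simp add: zero_less_mult_iff)
  have gR: "\<gamma> \<in> R" using g(1) Sr_sub by blast
  show ?case
  proof (cases "\<exists>t. \<beta> = t *\<^sub>R \<gamma>")
    case True
    then obtain t where t: "\<beta> = t *\<^sub>R \<gamma>" by blast
    then have "t \<noteq> 0" using b0 by auto
    then have "rfl \<beta> = rfl \<gamma>" using t rfl_scale by simp
    then show ?thesis using g(1) by (simp add: gen_by_gen)
  next
    case False
    define \<beta>' where "\<beta>' = rfl \<gamma> \<beta>"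
    have b'R: "\<beta>' \<in> R" using rfl_R[OF gR less(2)] \<beta>'_def by simp
    have "nn_comb Sr \<beta>'"
    proof (rule ccontr)
      assume "\<not> nn_comb Sr \<beta>'"
      then have "nn_comb Sr (- rfl \<gamma> \<beta>)" using pos_or_neg[OF b'R] \<beta>'_def by simp
      moreover have "nn_comb Sr \<beta>" unfolding nn_comb_def using less(3) by blast
      ultimately show False using key[OF g(1) less(2)] False by blast
    qed
    then obtain e where e: "\<beta>' = (\<Sum>\<gamma>\<in>Sr. real (e \<gamma>) *\<^sub>R \<gamma>)" unfolding nn_comb_def by blast
    define k where "k = 2 * (\<beta> \<bullet> \<gamma>) / (\<gamma> \<bullet> \<gamma>)"
    have kI: "k \<in> \<int>" using int_R[OF gR less(2)] k_def by simp
    have kp: "k > 0" unfolding k_def using gb inner_pos[OF gR] by (simp add: inner_commute)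
    obtain n where n: "k = of_int n" using kI Ints_cases by blast
    have k1: "k \<ge> 1" using kp n by simp
    have "\<beta>' = \<beta> - k *\<^sub>R \<gamma>" unfolding \<beta>'_def rfl_def k_def by simp
    also have "\<dots> = (\<Sum>\<delta>\<in>Sr. (real (c \<delta>) - (if \<delta> = \<gamma> then k else 0)) *\<^sub>R \<delta>)"
      using less(3) sum_delta_vec[OF g(1), of k]
      by (simp add: scaleR_diff_left sum_subtractf)
    finally have eq: "(\<Sum>\<delta>\<in>Sr. real (e \<delta>) *\<^sub>R \<delta>) = (\<Sum>\<delta>\<in>Sr. (real (c \<delta>) - (if \<delta> = \<gamma> then k else 0)) *\<^sub>R \<delta>)"
      using e by simp
    have ce: "\<forall>\<delta>\<in>Sr. real (e \<delta>) = real (c \<delta>) - (if \<delta> = \<gamma> then k else 0)"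
      using coef_unique[of "\<lambda>\<delta>. real (e \<delta>)" "\<lambda>\<delta>. real (c \<delta>) - (if \<delta> = \<gamma> then k else 0)", OF eq] by blast
    have "real (sum e Sr) = (\<Sum>\<delta>\<in>Sr. real (c \<delta>) - (if \<delta> = \<gamma> then k else 0))"
      using ce by simp
    also have "\<dots> = real (sum c Sr) - k"
      using g(1) finSr by (simp add: sum_subtractf)
    finally have "sum e Sr < sum c Sr" using k1 by linarith
    then have IH: "rfl \<beta>' \<in> gen_by (rfl ` Sr)" using less(1)[OF _ b'R e] by blast
    have conj: "rfl \<beta> = rfl \<gamma> \<circ> rfl \<beta>' \<circ> rfl \<gamma>"
    proof
      fix z
      have "rfl \<gamma> \<beta>' = \<beta>" unfolding \<beta>'_def using rfl_invol nz gR by blast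
      then have "rfl \<gamma> (rfl \<beta>' (rfl \<gamma> z)) = rfl \<beta> (rfl \<gamma> (rfl \<gamma> z))"
        using rfl_conj[OF rfl_linear, of \<gamma> \<beta>' "rfl \<gamma> z"] rfl_inner nz gR by metis
      moreover have "rfl \<gamma> (rfl \<gamma> z) = z" using rfl_invol nz gR by blast
      ultimately show "rfl \<beta> z = (rfl \<gamma> \<circ> rfl \<beta>' \<circ> rfl \<gamma>) z" by simp
    qed
    have gg: "rfl \<gamma> \<in> gen_by (rfl ` Sr)" using g(1) by (intro gen_by_gen) auto
    show ?thesis unfolding conj by (rule gen_by_comp[OF gen_by_comp[OF gg IH] gg])
  qed
qed

lemma refl_in_WS: "\<beta> \<in> R \<Longrightarrow> rfl \<beta> \<in> gen_by (rfl ` Sr)"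
proof -
  assume b: "\<beta> \<in> R"
  show ?thesis
  proof (cases "nn_comb Sr \<beta>")
    case True
    then show ?thesis using refl_in_WS_pos b unfolding nn_comb_def by blast
  next
    case False
    then have "nn_comb Sr (- \<beta>)" using pos_or_neg b by blast
    then show ?thesis using refl_in_WS_pos[of "- \<beta>"] neg_R b rfl_neg unfolding nn_comb_def by metis
  qed
qed

lemma weyl_eq: "weyl R = gen_by (rfl ` Sr)"
proof
  show "weyl R \<subseteq> gen_by (rfl ` Sr)"
    unfolding weyl_def using gen_by_subset refl_in_WS by blast
  show "gen_by (rfl ` Sr) \<subseteq> weyl R"
    unfolding weyl_def using gen_by_mono Sr_sub by (metis image_mono subsetI)
qed

lemma deletion:
  "set ts \<subseteq> rfl ` Sr \<Longrightarrow> \<gamma> \<in> R \<Longrightarrow> nn_comb Sr \<gamma> \<Longrightarrow> nn_comb Sr (- \<beta>) \<Longrightarrow>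
   foldr (\<circ>) ts id \<beta> = \<gamma> \<Longrightarrow>
   \<exists>ts'. set ts' \<subseteq> set ts \<and> Suc (length ts') = length ts \<and> foldr (\<circ>) ts' id = rfl \<gamma> \<circ> foldr (\<circ>) ts id"
proof (induction ts arbitrary: \<gamma>)
  case Nil
  then have "\<beta> = \<gamma>" by simp
  then show ?case using not_pos_neg[of \<gamma>] nz[of \<gamma>] Nil by auto
next
  case (Cons s ts0)
  then obtain \<alpha> where a: "\<alpha> \<in> Sr" "s = rfl \<alpha>" by auto
  have aR: "\<alpha> \<in> R" using a Sr_sub by blast
  define w0 where "w0 = foldr (\<circ>) ts0 id"
  have fw: "foldr (\<circ>) (s # ts0) id = s \<circ> w0" unfolding w0_def by (simp only: fc)
  have "s (w0 \<beta>) = \<gamma>" using Cons(6)[unfolded fw] by simp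
  then have w0b: "w0 \<beta> = s \<gamma>" using a rfl_invol nz aR by metis
  have sgR: "s \<gamma> \<in> R" using a rfl_R aR Cons(3) by simp
  show ?case
  proof (cases "nn_comb Sr (s \<gamma>)")
    case True
    have pre: "foldr (\<circ>) ts0 id \<beta> = s \<gamma>" using w0b w0_def by simp
    have st: "set ts0 \<subseteq> rfl ` Sr" using Cons(2) by simp
    obtain ts0' where t: "set ts0' \<subseteq> set ts0" "Suc (length ts0') = length ts0"
       "foldr (\<circ>) ts0' id = rfl (s \<gamma>) \<circ> foldr (\<circ>) ts0 id"
      using Cons(1)[OF st sgR True Cons(5) pre] by blast
    have c: "s \<circ> rfl (s \<gamma>) = rfl \<gamma> \<circ> s"
    proof
      fix y
      have "s (rfl (s \<gamma>) y) = rfl (s (s \<gamma>)) (s y)"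
        using a rfl_conj[OF rfl_linear] rfl_inner nz aR by metis
      moreover have "rfl \<alpha> (rfl \<alpha> \<gamma>) = \<gamma>" using rfl_invol nz aR by blast
      ultimately show "(s \<circ> rfl (s \<gamma>)) y = (rfl \<gamma> \<circ> s) y" using a by simp
    qed
    have "foldr (\<circ>) (s # ts0') id = s \<circ> (rfl (s \<gamma>) \<circ> w0)" using t(3) w0_def by (simp only: fc)
    also have "\<dots> = rfl \<gamma> \<circ> (s \<circ> w0)" using c by (metis comp_assoc)
    finally have F: "foldr (\<circ>) (s # ts0') id = rfl \<gamma> \<circ> (s \<circ> w0)" .
    have A1: "set (s # ts0') \<subseteq> set (s # ts0)" "Suc (length (s # ts0')) = length (s # ts0)"
      using t by auto
    show ?thesis using F[folded fw] A1 by blast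
  next
    case False
    then have "nn_comb Sr (- rfl \<alpha> \<gamma>)" using pos_or_neg[OF sgR] a by simp
    then obtain c where c: "\<gamma> = c *\<^sub>R \<alpha>" using key[OF a(1) Cons(3,4)] by blast
    then have "c \<noteq> 0" using zero_notin Cons(3) by auto
    then have rg: "rfl \<gamma> = s" using c a rfl_scale by simp
    have "rfl \<gamma> \<circ> (s \<circ> w0) = w0" unfolding rg using a invR[OF aR] by (auto simp: fun_eq_iff)
    then have F: "foldr (\<circ>) ts0 id = rfl \<gamma> \<circ> foldr (\<circ>) (s # ts0) id" using fw w0_def by simp
    have A1: "set ts0 \<subseteq> set (s # ts0)" "Suc (length ts0) = length (s # ts0)" by auto
    show ?thesis using F A1 by blast
  qed
qed

lemma L1:
  assumes "B \<subseteq> Sr" "w \<in> gen_by (rfl ` B)" "\<alpha> \<in> B" "nn_comb Sr (- \<beta>)" "w \<beta> = \<alpha>"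
  shows "word_len (rfl ` B) (rfl \<alpha> \<circ> w) < word_len (rfl ` B) w"
proof -
  obtain ts where ts: "set ts \<subseteq> rfl ` B" "length ts = word_len (rfl ` B) w" "w = foldr (\<circ>) ts id"
    using wl_exists[OF assms(2)] by blast
  have aS: "\<alpha> \<in> Sr" using assms by blast
  have "set ts \<subseteq> rfl ` Sr" using ts(1) assms(1) by blast
  then obtain ts' where t: "set ts' \<subseteq> set ts" "Suc (length ts') = length ts"
      "foldr (\<circ>) ts' id = rfl \<alpha> \<circ> foldr (\<circ>) ts id"
    using deletion[of ts \<alpha> \<beta>] aS Sr_sub nn_simple assms(4,5) ts(3) by blast
  have "word_len (rfl ` B) (rfl \<alpha> \<circ> w) \<le> length ts'"
    using wl_le[of ts' "rfl ` B"] t ts by auto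
  then show ?thesis using t(2) ts(2) by simp
qed

end

context rs begin

lemma nn_sub:
  assumes "B \<subseteq> Sr" "nn_comb B v" shows "nn_comb Sr v"
proof -
  obtain c where c: "v = (\<Sum>\<gamma>\<in>B. real (c \<gamma>) *\<^sub>R \<gamma>)" using assms(2) unfolding nn_comb_def by blast
  define c' where "c' \<gamma> = (if \<gamma> \<in> B then c \<gamma> else 0)" for \<gamma>
  have "(\<Sum>\<gamma>\<in>Sr. real (c' \<gamma>) *\<^sub>R \<gamma>) = (\<Sum>\<gamma>\<in>B. real (c' \<gamma>) *\<^sub>R \<gamma>)"
    by (rule sum.mono_neutral_right) (use finSr assms(1) c'_def in auto)
  also have "\<dots> = v" unfolding c c'_def by (rule sum.cong) auto
  finally show ?thesis unfolding nn_comb_def by metis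
qed

lemma nn_span: "nn_comb B v \<Longrightarrow> v \<in> span B"
proof -
  assume "nn_comb B v"
  then obtain c where c: "v = (\<Sum>\<gamma>\<in>B. real (c \<gamma>) *\<^sub>R \<gamma>)" unfolding nn_comb_def by blast
  show ?thesis unfolding c
    by (rule span_sum, rule span_scale, rule span_base) simp
qed

lemma nn_restrict:
  assumes "B \<subseteq> Sr" "v \<in> span B" "nn_comb Sr v" shows "nn_comb B v"
proof -
  have fB: "finite B" using finSr assms(1) finite_subset by blast
  obtain u where u: "v = (\<Sum>\<gamma>\<in>B. u \<gamma> *\<^sub>R \<gamma>)" using assms(2) span_finite[OF fB] by blast
  obtain c where c: "v = (\<Sum>\<gamma>\<in>Sr. real (c \<gamma>) *\<^sub>R \<gamma>)" using assms(3) unfolding nn_comb_def by blast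
  define u' where "u' \<gamma> = (if \<gamma> \<in> B then u \<gamma> else 0)" for \<gamma>
  have "(\<Sum>\<gamma>\<in>Sr. u' \<gamma> *\<^sub>R \<gamma>) = (\<Sum>\<gamma>\<in>B. u' \<gamma> *\<^sub>R \<gamma>)"
    by (rule sum.mono_neutral_right) (use finSr assms(1) u'_def in auto)
  also have "\<dots> = v" unfolding u u'_def by (rule sum.cong) auto
  finally have eq: "(\<Sum>\<gamma>\<in>Sr. real (c \<gamma>) *\<^sub>R \<gamma>) = (\<Sum>\<gamma>\<in>Sr. u' \<gamma> *\<^sub>R \<gamma>)" using c by simp
  have z: "\<forall>\<gamma>\<in>Sr - B. c \<gamma> = 0"
  proof
    fix \<gamma> assume g: "\<gamma> \<in> Sr - B"
    then have "real (c \<gamma>) = u' \<gamma>" using coef_unique[of "\<lambda>\<gamma>. real (c \<gamma>)" u', OF eq] by blast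
    then show "c \<gamma> = 0" using g u'_def by simp
  qed
  have "v = (\<Sum>\<gamma>\<in>B. real (c \<gamma>) *\<^sub>R \<gamma>)"
    unfolding c by (rule sum.mono_neutral_left[symmetric]) (use finSr assms(1) z in auto)
  then show ?thesis unfolding nn_comb_def by blast
qed

lemma span_pres:
  assumes "B \<subseteq> Sr" "w \<in> gen_by (rfl ` B)" "v \<in> span B" shows "w v \<in> span B"
  using assms(2,3)
proof (induction w arbitrary: v rule: gen_by.induct)
  case gen_id
  then show ?case by simp
next
  case (gen_step t w)
  then obtain \<alpha> where a: "\<alpha> \<in> B" "t = rfl \<alpha>" by blast
  have "w v \<in> span B" using gen_step by blast
  moreover have "\<alpha> \<in> span B" using a(1) by (rule span_base)
  ultimately show ?case unfolding a rfl_def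
    by (simp add: span_diff span_scale)
qed

lemma dom_simple:
  assumes "\<forall>\<alpha>\<in>B. 0 \<le> x \<bullet> \<alpha>" "nn_comb B \<beta>" shows "0 \<le> x \<bullet> \<beta>"
proof -
  obtain c where c: "\<beta> = (\<Sum>\<gamma>\<in>B. real (c \<gamma>) *\<^sub>R \<gamma>)" using assms(2) unfolding nn_comb_def by blast
  show ?thesis unfolding c inner_sum_right using assms(1) by (auto intro!: sum_nonneg)
qed

lemma nn_B_simple: "B \<subseteq> Sr \<Longrightarrow> \<alpha> \<in> B \<Longrightarrow> nn_comb B \<alpha>"
  using nn_restrict[of B \<alpha>] nn_simple span_base by blast

lemma rfl_fix: "x \<bullet> \<alpha> = 0 \<Longrightarrow> rfl \<alpha> x = x"
  unfolding rfl_def by simp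

lemma GU:
  assumes "B \<subseteq> Sr" "w \<in> gen_by (rfl ` B)"
    "\<forall>\<beta>\<in>R. nn_comb B \<beta> \<longrightarrow> 0 \<le> x \<bullet> \<beta>" "\<forall>\<beta>\<in>R. nn_comb B \<beta> \<longrightarrow> 0 \<le> w x \<bullet> \<beta>"
  shows "w x = x"
  using assms(2,4)
proof (induction "word_len (rfl ` B) w" arbitrary: w rule: less_induct)
  case less
  have BR: "B \<subseteq> R" using assms(1) Sr_sub by blast
  show ?case
  proof (cases "word_len (rfl ` B) w = 0")
    case True
    then show ?thesis using wl_0 less(2) by fastforce
  next
    case False
    obtain ts where ts: "set ts \<subseteq> rfl ` B" "length ts = word_len (rfl ` B) w" "w = foldr (\<circ>) ts id"
      using wl_exists[OF less(2)] by blast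
    then obtain s ts0 where ts0: "ts = s # ts0" using False by (cases ts) auto
    obtain \<alpha> where a: "\<alpha> \<in> B" "s = rfl \<alpha>" using ts ts0 by auto
    have aR: "\<alpha> \<in> R" using a BR by blast
    define w0 where "w0 = foldr (\<circ>) ts0 id"
    have w0W: "w0 \<in> gen_by (rfl ` B)" unfolding w0_def using ts ts0 by (intro word_gen_by) auto
    have lw0: "word_len (rfl ` B) w0 < word_len (rfl ` B) w"
      using wl_le[of ts0 "rfl ` B"] ts ts0 w0_def by auto
    have ww: "w = s \<circ> w0" unfolding w0_def ts(3) ts0 by (simp only: fc)
    obtain w0' where w0': "w0' \<in> gen_by (rfl ` B)" "\<forall>x. w0' (w0 x) = x" "\<forall>x. w0 (w0' x) = x"
      using gen_inv[OF w0W BR] by blast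
    define \<beta> where "\<beta> = w0' \<alpha>"
    have bR: "\<beta> \<in> R" using isom_gen[OF w0'(1) BR] aR \<beta>_def by blast
    have bspan: "\<beta> \<in> span B" unfolding \<beta>_def using span_pres[OF assms(1) w0'(1)] a span_base by blast
    have w0b: "w0 \<beta> = \<alpha>" using w0' \<beta>_def by simp
    have "nn_comb Sr \<beta>"
    proof (rule ccontr)
      assume "\<not> nn_comb Sr \<beta>"
      then have "nn_comb Sr (- \<beta>)" using pos_or_neg bR by blast
      then have "word_len (rfl ` B) (rfl \<alpha> \<circ> w0) < word_len (rfl ` B) w0"
        using L1[OF assms(1) w0W a(1) _ w0b] by blast
      then show False using lw0 ww a by simp
    qed
    then have bB: "nn_comb B \<beta>" using nn_restrict[OF assms(1) bspan] by blast
    have iso: "\<forall>x y. w x \<bullet> w y = x \<bullet> y" using isom_gen[OF less(2) BR] by blast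
    have lin: "linear w" using isom_gen[OF less(2) BR] by blast
    have wb: "w \<beta> = - \<alpha>" using ww w0b a rfl_self[OF nz[OF aR]] by simp
    have "0 \<le> w x \<bullet> \<alpha>" using less(3) aR nn_B_simple[OF assms(1) a(1)] by blast
    moreover have "w x \<bullet> w \<beta> = x \<bullet> \<beta>" using iso by blast
    moreover have "0 \<le> x \<bullet> \<beta>" using assms(3) bR bB by blast
    ultimately have "w x \<bullet> \<alpha> = 0" using wb by simp
    then have sw: "s (w x) = w x" using a rfl_fix by simp
    have "w0 x = s (s (w0 x))" using a invR[OF aR] by simp
    also have "\<dots> = w x" using sw ww by simp
    finally have e: "w0 x = w x" .
    have "w0 x = x" using less(1)[OF lw0 w0W] less(3) e by simp
    then show ?thesis using e by simp
  qed
qed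

definition mcount :: "'a \<Rightarrow> nat" where
  "mcount x = card {\<beta>\<in>R. nn_comb Sr \<beta> \<and> x \<bullet> \<beta> < 0}"

lemma m_dec:
  assumes "\<alpha> \<in> Sr" "x \<bullet> \<alpha> < 0" shows "mcount (rfl \<alpha> x) < mcount x"
proof -
  have aR: "\<alpha> \<in> R" using assms Sr_sub by blast
  define A where "A = {\<beta>\<in>R. nn_comb Sr \<beta> \<and> rfl \<alpha> x \<bullet> \<beta> < 0}"
  define C where "C = {\<beta>\<in>R. nn_comb Sr \<beta> \<and> x \<bullet> \<beta> < 0}"
  have fC: "finite C" unfolding C_def using finR by simp
  have aC: "\<alpha> \<in> C" unfolding C_def using aR nn_simple assms by blast
  have sub: "rfl \<alpha> ` A \<subseteq> C - {\<alpha>}"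
  proof
    fix z assume "z \<in> rfl \<alpha> ` A"
    then obtain \<beta> where b: "\<beta> \<in> A" "z = rfl \<alpha> \<beta>" by blast
    have bR: "\<beta> \<in> R" and bp: "nn_comb Sr \<beta>" and bn: "rfl \<alpha> x \<bullet> \<beta> < 0" using b A_def by auto
    have nm: "\<not> (\<exists>c. \<beta> = c *\<^sub>R \<alpha>)"
    proof
      assume "\<exists>c. \<beta> = c *\<^sub>R \<alpha>"
      then obtain c where c: "\<beta> = c *\<^sub>R \<alpha>" by blast
      obtain d where d: "\<beta> = (\<Sum>\<gamma>\<in>Sr. real (d \<gamma>) *\<^sub>R \<gamma>)" using bp unfolding nn_comb_def by blast
      have "(\<Sum>\<gamma>\<in>Sr. real (d \<gamma>) *\<^sub>R \<gamma>) = (\<Sum>\<gamma>\<in>Sr. (if \<gamma> = \<alpha> then c else 0) *\<^sub>R \<gamma>)"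
        unfolding sum_delta_vec[OF assms(1)] using c d by simp
      then have "real (d \<alpha>) = c" using coef_unique[of "\<lambda>\<gamma>. real (d \<gamma>)" "\<lambda>\<gamma>. if \<gamma> = \<alpha> then c else 0"] assms(1) by fastforce
      moreover have "c \<noteq> 0" using c zero_notin bR by auto
      ultimately have "c > 0" by (metis of_nat_0_le_iff order_le_less)
      have "rfl \<alpha> x \<bullet> \<beta> = c * (rfl \<alpha> x \<bullet> \<alpha>)" using c by simp
      also have "rfl \<alpha> x \<bullet> \<alpha> = - (x \<bullet> \<alpha>)" unfolding rfl_def using nz aR by (simp add: inner_diff_left)
      finally have "rfl \<alpha> x \<bullet> \<beta> > 0" using \<open>c > 0\<close> assms(2) by (simp add: mult_pos_neg)
      then show False using bn by simp
    qed
    have zR: "z \<in> R" using b rfl_R aR bR by simp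
    have zp: "nn_comb Sr z"
    proof (rule ccontr)
      assume "\<not> nn_comb Sr z"
      then have "nn_comb Sr (- rfl \<alpha> \<beta>)" using pos_or_neg zR b by blast
      then show False using key[OF assms(1) bR bp] nm by blast
    qed
    have "x \<bullet> z = rfl \<alpha> x \<bullet> \<beta>"
      using rfl_inner[of \<alpha> x z] nz aR b invR by metis
    then have zn: "x \<bullet> z < 0" using bn by simp
    have "z \<noteq> \<alpha>"
    proof
      assume "z = \<alpha>"
      then have "\<beta> = - \<alpha>" using b invR[OF aR] rfl_self nz aR by metis
      then show False using bp nn_simple assms(1) not_pos_neg nz aR by (metis minus_minus)
    qed
    then show "z \<in> C - {\<alpha>}" unfolding C_def using zR zp zn by blast
  qed
  have inj: "inj_on (rfl \<alpha>) A" using invR[OF aR] by (metis inj_onI)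
  have "card A = card (rfl \<alpha> ` A)" using card_image[OF inj] by simp
  also have "\<dots> \<le> card (C - {\<alpha>})" using card_mono[OF _ sub] fC by simp
  also have "\<dots> < card C" using card_Diff1_less[OF fC aC] .
  finally show ?thesis unfolding mcount_def A_def C_def by simp
qed

end

context rs begin

lemma CE:
  assumes "B \<subseteq> Sr"
  shows "\<exists>w\<in>gen_by (rfl ` B). \<forall>\<delta>\<in>B. 0 \<le> w x \<bullet> \<delta>"
proof (induction "mcount x" arbitrary: x rule: less_induct)
  case less
  show ?case
  proof (cases "\<forall>\<alpha>\<in>B. 0 \<le> x \<bullet> \<alpha>")
    case True
    then show ?thesis by (intro bexI[of _ id]) (auto intro: gen_by.intros)
  next
    case False
    then obtain \<alpha> where a: "\<alpha> \<in> B" "x \<bullet> \<alpha> < 0" by force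
    have "mcount (rfl \<alpha> x) < mcount x" using m_dec a assms by blast
    then obtain w where w: "w \<in> gen_by (rfl ` B)" "\<forall>\<delta>\<in>B. 0 \<le> w (rfl \<alpha> x) \<bullet> \<delta>"
      using less(1) by blast
    have "rfl \<alpha> \<in> gen_by (rfl ` B)" using a by (intro gen_by_gen) auto
    then have "w \<circ> rfl \<alpha> \<in> gen_by (rfl ` B)" using gen_by_comp[OF w(1)] by blast
    then show ?thesis using w(2) by (intro bexI[of _ "w \<circ> rfl \<alpha>"]) auto
  qed
qed

definition isMin :: "'a \<Rightarrow> 'a \<Rightarrow> ('a \<Rightarrow> 'a) \<Rightarrow> bool" where
  "isMin y x v \<longleftrightarrow> v \<in> gen_by (rfl ` Sr) \<and> v y = x \<and>
     (\<forall>w'\<in>gen_by (rfl ` Sr). w' y = x \<longrightarrow> word_len (rfl ` Sr) v \<le> word_len (rfl ` Sr) w')"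

lemma isMin_ex:
  assumes "w \<in> gen_by (rfl ` Sr)" "w y = x" shows "\<exists>v. isMin y x v"
proof -
  obtain v where "v \<in> gen_by (rfl ` Sr) \<and> v y = x" "\<forall>w'. w' \<in> gen_by (rfl ` Sr) \<and> w' y = x \<longrightarrow> word_len (rfl ` Sr) v \<le> word_len (rfl ` Sr) w'"
    using ex_has_least_nat[of "\<lambda>w. w \<in> gen_by (rfl ` Sr) \<and> w y = x" w "word_len (rfl ` Sr)"] assms by blast
  then show ?thesis unfolding isMin_def by blast
qed

lemma SrR: "Sr \<subseteq> R" by (rule Sr_sub)

lemma inv_root:
  assumes "v \<in> gen_by (rfl ` Sr)" "\<alpha> \<in> R"
  shows "\<exists>\<beta>\<in>R. v \<beta> = \<alpha>"
proof -
  obtain v' where v': "v' \<in> gen_by (rfl ` Sr)" "\<forall>x. v (v' x) = x" using gen_inv[OF assms(1) SrR] by blast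
  have "v' \<alpha> \<in> R" using isom_gen[OF v'(1) SrR] assms(2) by blast
  then show ?thesis using v' by blast
qed

lemma VU:
  assumes "\<forall>\<beta>\<in>R. nn_comb Sr \<beta> \<longrightarrow> 0 \<le> y \<bullet> \<beta>"
  shows "isMin y x v \<Longrightarrow> isMin y x v' \<Longrightarrow> v = v'"
proof (induction "word_len (rfl ` Sr) v" arbitrary: x v v' rule: less_induct)
  case less
  let ?l = "word_len (rfl ` Sr)"
  let ?W = "gen_by (rfl ` Sr)"
  have vW: "v \<in> ?W" "v y = x" and vm: "\<forall>w'\<in>?W. w' y = x \<longrightarrow> ?l v \<le> ?l w'"
    using less(2) unfolding isMin_def by auto
  have v'W: "v' \<in> ?W" "v' y = x" and v'm: "\<forall>w'\<in>?W. w' y = x \<longrightarrow> ?l v' \<le> ?l w'"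
    using less(3) unfolding isMin_def by auto
  have "?l v \<le> ?l v'" using vm v'W by blast
  moreover have "?l v' \<le> ?l v" using v'm vW by blast
  ultimately have eql: "?l v = ?l v'" by simp
  show ?case
  proof (cases "?l v = 0")
    case True
    then show ?thesis using wl_0 vW(1) v'W(1) eql by metis
  next
    case False
    obtain ts where ts: "set ts \<subseteq> rfl ` Sr" "length ts = ?l v" "v = foldr (\<circ>) ts id"
      using wl_exists[OF vW(1)] by blast
    then obtain s ts0 where ts0: "ts = s # ts0" using False by (cases ts) auto
    obtain \<alpha> where a: "\<alpha> \<in> Sr" "s = rfl \<alpha>" using ts ts0 by auto
    have aR: "\<alpha> \<in> R" using a SrR by blast
    have sW: "s \<in> ?W" using a by (intro gen_by_gen) auto
    define v0 where "v0 = foldr (\<circ>) ts0 id"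
    have v0W: "v0 \<in> ?W" unfolding v0_def using ts ts0 by (intro word_gen_by) auto
    have lv0: "?l v0 < ?l v" using wl_le[of ts0 "rfl ` Sr"] ts ts0 v0_def by auto
    have vv: "v = s \<circ> v0" unfolding v0_def ts(3) ts0 by (simp only: fc)
    have ss: "\<And>z. s (s z) = z" using a invR[OF aR] by simp
    have v0v: "v0 = s \<circ> v" using vv ss by (auto simp: fun_eq_iff)
    have lv0': "?l v \<le> Suc (?l v0)" using wl_cons[OF _ v0W, of s] a vv by auto
    have v0y: "v0 y = s x" using v0v vW by simp
    have minv0: "isMin y (s x) v0"
      unfolding isMin_def
    proof (intro conjI v0W v0y ballI impI)
      fix w' assume w': "w' \<in> ?W" "w' y = s x"
      have "s \<circ> w' \<in> ?W" using gen_by_comp[OF sW w'(1)] .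
      moreover have "(s \<circ> w') y = x" using w' ss by simp
      ultimately have "?l v \<le> ?l (s \<circ> w')" using vm by blast
      also have "\<dots> \<le> Suc (?l w')" using wl_cons[OF _ w'(1), of s] a by auto
      finally show "?l v0 \<le> ?l w'" using lv0 by simp
    qed
    have lin_v: "linear v" and iso_v: "\<forall>a b. v a \<bullet> v b = a \<bullet> b"
      using isom_gen[OF vW(1) SrR] by auto
    obtain \<beta> where b: "\<beta> \<in> R" "v \<beta> = \<alpha>" using inv_root[OF vW(1) aR] by blast
    have bneg: "nn_comb Sr (- \<beta>)"
    proof (rule ccontr)
      assume "\<not> nn_comb Sr (- \<beta>)"
      then have bp: "nn_comb Sr (- (- \<beta>))" using pos_or_neg[OF b(1)] by simp
      have "v0 (- \<beta>) = s (- \<alpha>)" using v0v b lin_v by (simp add: linear_neg)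
      also have "\<dots> = \<alpha>" using a rfl_linear[of \<alpha>] linear_neg rfl_self[OF nz[OF aR]] by (metis minus_minus)
      finally have "?l (rfl \<alpha> \<circ> v0) < ?l v0" using L1[OF order_refl v0W a(1) bp] by blast
      then show False using vv a lv0 by simp
    qed
    have xa: "x \<bullet> \<alpha> = y \<bullet> \<beta>" using iso_v vW b by metis
    have "0 \<le> y \<bullet> (- \<beta>)" using assms neg_R b bneg by blast
    then have xa0: "x \<bullet> \<alpha> \<le> 0" using xa by simp
    have "x \<bullet> \<alpha> \<noteq> 0"
    proof
      assume "x \<bullet> \<alpha> = 0"
      then have "s x = x" using a rfl_fix by simp
      then have "?l v \<le> ?l v0" using vm v0W v0y by metis
      then show False using lv0 by simp
    qed
    then have xneg: "x \<bullet> \<alpha> < 0" using xa0 by simp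
    have iso_v': "\<forall>a b. v' a \<bullet> v' b = a \<bullet> b" using isom_gen[OF v'W(1) SrR] by auto
    obtain \<beta>' where b': "\<beta>' \<in> R" "v' \<beta>' = \<alpha>" using inv_root[OF v'W(1) aR] by blast
    have "x \<bullet> \<alpha> = y \<bullet> \<beta>'" using iso_v' v'W b' by metis
    then have "\<not> nn_comb Sr \<beta>'" using assms b'(1) xneg by force
    then have "nn_comb Sr (- \<beta>')" using pos_or_neg b'(1) by blast
    then have "?l (rfl \<alpha> \<circ> v') < ?l v'" using L1[OF order_refl v'W(1) a(1) _ b'(2)] by blast
    then have l1: "?l (s \<circ> v') < ?l v" using eql a by simp
    have minv1: "isMin y (s x) (s \<circ> v')"
      unfolding isMin_def
    proof (intro conjI ballI impI)
      show "s \<circ> v' \<in> ?W" using gen_by_comp[OF sW v'W(1)] .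
      show "(s \<circ> v') y = s x" using v'W by simp
      fix w' assume w': "w' \<in> ?W" "w' y = s x"
      have "?l v0 \<le> ?l w'" using minv0 w' unfolding isMin_def by blast
      then show "?l (s \<circ> v') \<le> ?l w'" using l1 lv0' by simp
    qed
    have "v0 = s \<circ> v'" using less(1)[OF lv0 minv0 minv1] .
    then have "v = s \<circ> (s \<circ> v')" using vv by simp
    then show ?thesis using ss by (auto simp: fun_eq_iff)
  qed
qed

lemma chain:
  assumes "\<forall>\<beta>\<in>R. nn_comb Sr \<beta> \<longrightarrow> 0 \<le> y \<bullet> \<beta>" "B \<subseteq> Sr"
  shows "isMin y x v \<Longrightarrow> \<exists>z u v'. u \<in> gen_by (rfl ` B) \<and> u x = z \<and> (\<forall>\<alpha>\<in>B. 0 \<le> z \<bullet> \<alpha>) \<and>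
           isMin y z v' \<and> bruhat_le R Sr v' v"
proof (induction "mcount x" arbitrary: x v rule: less_induct)
  case less
  let ?l = "word_len (rfl ` Sr)"
  let ?W = "gen_by (rfl ` Sr)"
  show ?case
  proof (cases "\<forall>\<alpha>\<in>B. 0 \<le> x \<bullet> \<alpha>")
    case True
    then show ?thesis using less(2) unfolding bruhat_le_def
      by (intro exI[of _ x] exI[of _ id] exI[of _ v]) (auto intro: gen_by.intros)
  next
    case False
    then obtain \<alpha> where a: "\<alpha> \<in> B" "x \<bullet> \<alpha> < 0" by force
    have aS: "\<alpha> \<in> Sr" using a assms(2) by blast
    have aR: "\<alpha> \<in> R" using aS SrR by blast
    define s where "s = rfl \<alpha>"
    have ss: "\<And>z. s (s z) = z" using invR[OF aR] s_def by simp
    have sW: "s \<in> ?W" using aS s_def by (intro gen_by_gen) auto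
    have vW: "v \<in> ?W" "v y = x" and vm: "\<forall>w'\<in>?W. w' y = x \<longrightarrow> ?l v \<le> ?l w'"
      using less(2) unfolding isMin_def by auto
    have iso_v: "\<forall>a b. v a \<bullet> v b = a \<bullet> b" using isom_gen[OF vW(1) SrR] by auto
    obtain \<beta> where b: "\<beta> \<in> R" "v \<beta> = \<alpha>" using inv_root[OF vW(1) aR] by blast
    have "x \<bullet> \<alpha> = y \<bullet> \<beta>" using iso_v vW b by metis
    then have "\<not> nn_comb Sr \<beta>" using assms(1) b(1) a(2) by force
    then have "nn_comb Sr (- \<beta>)" using pos_or_neg b(1) by blast
    then have lt: "?l (s \<circ> v) < ?l v" using L1[OF order_refl vW(1) aS _ b(2)] s_def by blast
    have svW: "s \<circ> v \<in> ?W" using gen_by_comp[OF sW vW(1)] .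
    have minsv: "isMin y (s x) (s \<circ> v)"
      unfolding isMin_def
    proof (intro conjI ballI impI svW)
      show "(s \<circ> v) y = s x" using vW by simp
      fix w' assume w': "w' \<in> ?W" "w' y = s x"
      show "?l (s \<circ> v) \<le> ?l w'"
      proof (rule ccontr)
        assume "\<not> ?l (s \<circ> v) \<le> ?l w'"
        then have h: "?l w' < ?l (s \<circ> v)" by simp
        have "s \<circ> w' \<in> ?W" using gen_by_comp[OF sW w'(1)] .
        moreover have "(s \<circ> w') y = x" using w' ss by simp
        ultimately have "?l v \<le> ?l (s \<circ> w')" using vm by blast
        also have "\<dots> \<le> Suc (?l w')" using wl_cons[OF _ w'(1), of s] aS s_def by auto
        finally show False using h lt by simp
      qed
    qed
    have step: "bruhat_step R Sr (s \<circ> v) v"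
      unfolding bruhat_step_def simple_refls_def weyl_eq
    proof (intro conjI svW vW(1) bexI[of _ \<alpha>] aR)
      show "v = rfl \<alpha> \<circ> (s \<circ> v)" using ss s_def by (auto simp: fun_eq_iff)
      show "?l (s \<circ> v) < ?l v" by (rule lt)
    qed
    have "mcount (s x) < mcount x" using m_dec[OF aS a(2)] s_def by simp
    then obtain z u v' where r: "u \<in> gen_by (rfl ` B)" "u (s x) = z" "\<forall>\<alpha>\<in>B. 0 \<le> z \<bullet> \<alpha>"
       "isMin y z v'" "bruhat_le R Sr v' (s \<circ> v)"
      using less(1)[OF _ minsv] by blast
    have "s \<in> gen_by (rfl ` B)" using a s_def by (intro gen_by_gen) auto
    then have uW: "u \<circ> s \<in> gen_by (rfl ` B)" using gen_by_comp[OF r(1)] by blast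
    have "bruhat_le R Sr v' v" using r(5) step unfolding bruhat_le_def
      by (meson rtranclp.rtrancl_into_rtrancl)
    then show ?thesis using uW r by (intro exI[of _ z] exI[of _ "u \<circ> s"] exI[of _ v']) auto
  qed
qed

end

lemma bruhat_mono:
  "bruhat_le R Sr a b \<Longrightarrow> a = b \<or> word_len (simple_refls Sr) a < word_len (simple_refls Sr) b"
  unfolding bruhat_le_def
proof (induction rule: rtranclp_induct)
  case base
  then show ?case by simp
next
  case (step y z)
  then show ?case unfolding bruhat_step_def by auto
qed

theorem mainTheorem6:
  fixes R Sr :: "'a::euclidean_space set" and I :: "('a \<Rightarrow> 'a) set" and lam mu :: 'a
  assumes "root_system R"
    and "is_base R Sr"
    and "I \<subseteq> simple_refls Sr"
    and "lam \<in> par_dominant R Sr I"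
    and "mu \<in> weight_lattice R"
    and "dom_rep R Sr mu = dom_rep R Sr lam"
    and "less_empty R Sr mu lam"
  shows "less_empty R Sr (par_rep R Sr I mu) lam"
proof -
  interpret rs R Sr using assms(1,2) by unfold_locales
  let ?W = "gen_by (rfl ` Sr)"
  let ?l = "word_len (rfl ` Sr)"
  have W: "weyl R = ?W" by (rule weyl_eq)
  have SL: "simple_refls Sr = rfl ` Sr" unfolding simple_refls_def ..
  have domI: "x \<in> dominant R Sr \<longleftrightarrow> x \<in> weight_lattice R \<and> (\<forall>\<beta>\<in>R. nn_comb Sr \<beta> \<longrightarrow> 0 \<le> x \<bullet> \<beta>)" for x
    unfolding dominant_def pos_roots_def by auto
  have dom_rep_eq: "dom_rep R Sr z = y" if y: "y \<in> dominant R Sr" and w: "w \<in> ?W" "w z = y" for y z w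
    unfolding dom_rep_def
  proof (rule the_equality)
    show "y \<in> dominant R Sr \<and> (\<exists>w\<in>weyl R. w z = y)" using y w W by blast
    fix y' assume y': "y' \<in> dominant R Sr \<and> (\<exists>w\<in>weyl R. w z = y')"
    then obtain w' where w': "w' \<in> ?W" "w' z = y'" using W by blast
    obtain wi where wi: "wi \<in> ?W" "\<forall>x. wi (w x) = x" using gen_inv[OF w(1) SrR] by blast
    have c: "w' \<circ> wi \<in> ?W" using gen_by_comp[OF w'(1) wi(1)] .
    have e: "(w' \<circ> wi) y = y'" using wi w w' by auto
    have "(w' \<circ> wi) y = y"
      using GU[OF order_refl c] y y' e unfolding domI by auto
    then show "y' = y" using e by simp
  qed
  have vbar_eq: "vbar R Sr x = v" if r: "dom_rep R Sr x = y" "y \<in> dominant R Sr" and m: "isMin y x v" for x y v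
    unfolding vbar_def r(1)
  proof (rule the_equality)
    show "v \<in> weyl R \<and> v y = x \<and> (\<forall>w'\<in>weyl R. w' y = x \<longrightarrow> word_len (simple_refls Sr) v \<le> word_len (simple_refls Sr) w')"
      using m unfolding isMin_def W SL by blast
    fix v'' assume "v'' \<in> weyl R \<and> v'' y = x \<and> (\<forall>w'\<in>weyl R. w' y = x \<longrightarrow> word_len (simple_refls Sr) v'' \<le> word_len (simple_refls Sr) w')"
    then have "isMin y x v''" unfolding isMin_def W SL by blast
    then show "v'' = v" using VU[OF _ m] r(2) unfolding domI by blast
  qed
  have exdom: "\<exists>w\<in>?W. w x \<in> dominant R Sr" if x: "x \<in> weight_lattice R" for x
  proof -
    obtain w where w: "w \<in> ?W" "\<forall>\<delta>\<in>Sr. 0 \<le> w x \<bullet> \<delta>" using CE[OF order_refl] by blast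
    have "w x \<in> weight_lattice R" using isom_gen[OF w(1) SrR] x by blast
    then show ?thesis using w dom_simple unfolding domI by blast
  qed
  have lamwl: "lam \<in> weight_lattice R" using assms(4) unfolding par_dominant_def by blast
  obtain wm where wm: "wm \<in> ?W" "wm mu \<in> dominant R Sr" using exdom[OF assms(5)] by blast
  define \<rho> where "\<rho> = wm mu"
  have rd: "\<rho> \<in> dominant R Sr" using wm \<rho>_def by simp
  have rdom: "\<forall>\<beta>\<in>R. nn_comb Sr \<beta> \<longrightarrow> 0 \<le> \<rho> \<bullet> \<beta>" using rd unfolding domI by blast
  have drm: "dom_rep R Sr mu = \<rho>" using dom_rep_eq[OF rd wm(1)] \<rho>_def by simp
  obtain wl where wl: "wl \<in> ?W" "wl lam \<in> dominant R Sr" using exdom[OF lamwl] by blast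
  have drl: "dom_rep R Sr lam = \<rho>" using drm assms(6) by simp
  have "dom_rep R Sr lam = wl lam" using dom_rep_eq[OF wl(2) wl(1)] by simp
  then have wll: "wl lam = \<rho>" using drl by simp
  obtain wmi where wmi: "wmi \<in> ?W" "\<forall>x. wmi (wm x) = x" "\<forall>x. wm (wmi x) = x" using gen_inv[OF wm(1) SrR] by blast
  obtain wli where wli: "wli \<in> ?W" "\<forall>x. wli (wl x) = x" using gen_inv[OF wl(1) SrR] by blast
  have "wmi \<rho> = mu" using wmi \<rho>_def by simp
  then obtain vm where vm: "isMin \<rho> mu vm" using isMin_ex[OF wmi(1)] by blast
  have "wli \<rho> = lam" using wli wll by metis
  then obtain vl where vl: "isMin \<rho> lam vl" using isMin_ex[OF wli(1)] by blast
  have vbm: "vbar R Sr mu = vm" using vbar_eq[OF drm rd vm] .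
  have vbl: "vbar R Sr lam = vl" using vbar_eq[OF drl rd vl] .
  have bml: "bruhat_le R Sr vm vl" and mul: "mu \<noteq> lam"
    using assms(7) drm drl vbm vbl unfolding less_empty_def le_empty_def by auto
  define P where "P = par_simple Sr I"
  have PS: "P \<subseteq> Sr" unfolding P_def par_simple_def by blast
  have PR: "P \<subseteq> R" using PS SrR by blast
  have IP: "rfl ` P = I"
  proof
    show "rfl ` P \<subseteq> I" unfolding P_def par_simple_def by blast
    show "I \<subseteq> rfl ` P"
    proof
      fix t assume t: "t \<in> I"
      then obtain \<alpha> where "\<alpha> \<in> Sr" "t = rfl \<alpha>" using assms(3) SL by blast
      then show "t \<in> rfl ` P" unfolding P_def par_simple_def using t by blast
    qed
  qed
  have pdomI: "x \<in> par_dominant R Sr I \<longleftrightarrow> x \<in> weight_lattice R \<and> (\<forall>\<beta>\<in>R. nn_comb P \<beta> \<longrightarrow> 0 \<le> x \<bullet> \<beta>)" for x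
    unfolding par_dominant_def par_pos_roots_def P_def by auto
  obtain z u v' where ch: "u \<in> gen_by (rfl ` P)" "u mu = z" "\<forall>\<alpha>\<in>P. 0 \<le> z \<bullet> \<alpha>"
    "isMin \<rho> z v'" "bruhat_le R Sr v' vm"
    using chain[OF rdom PS vm] by blast
  have zwl: "z \<in> weight_lattice R" using isom_gen[OF ch(1) PR] assms(5) ch(2) by blast
  have zpd: "z \<in> par_dominant R Sr I" unfolding pdomI using zwl ch(3) dom_simple by blast
  obtain ui where ui: "ui \<in> gen_by (rfl ` P)" "\<forall>x. ui (u x) = x" using gen_inv[OF ch(1) PR] by blast
  have prz: "par_rep R Sr I mu = z"
    unfolding par_rep_def par_weyl_def
  proof (rule the_equality)
    show "z \<in> par_dominant R Sr I \<and> (\<exists>w\<in>gen_by I. w mu = z)" using zpd ch(1,2) IP by blast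
    fix y' assume "y' \<in> par_dominant R Sr I \<and> (\<exists>w\<in>gen_by I. w mu = y')"
    then obtain w where w: "w \<in> gen_by (rfl ` P)" "w mu = y'" "y' \<in> par_dominant R Sr I" using IP by blast
    have c: "w \<circ> ui \<in> gen_by (rfl ` P)" using gen_by_comp[OF w(1) ui(1)] .
    have e: "(w \<circ> ui) z = y'" using ui w ch(2) by auto
    have "(w \<circ> ui) z = z"
      using GU[OF PS c] zpd w(3) e unfolding pdomI by auto
    then show "y' = z" using e by simp
  qed
  have uiW: "ui \<in> ?W" using gen_by_mono[OF ui(1)] PS by blast
  have "ui z = mu" using ui(2) ch(2) by metis
  then have "(wm \<circ> ui) z = \<rho>" using \<rho>_def by simp
  then have drz: "dom_rep R Sr z = \<rho>" using dom_rep_eq[OF rd gen_by_comp[OF wm(1) uiW]] by blast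
  have vbz: "vbar R Sr z = v'" using vbar_eq[OF drz rd ch(4)] .
  have bzl: "bruhat_le R Sr v' vl" using ch(5) bml unfolding bruhat_le_def by (rule rtranclp_trans)
  have "z \<noteq> lam"
  proof
    assume "z = lam"
    then have "v' = vl" using vbz vbl by simp
    then have b2: "bruhat_le R Sr vl vm" using ch(5) by simp
    have "vm = vl" using bruhat_mono[OF bml] bruhat_mono[OF b2] by auto
    then have "mu = lam" using vm vl unfolding isMin_def by metis
    then show False using mul by simp
  qed
  then show ?thesis
    unfolding prz less_empty_def le_empty_def dom_order_def drz drl vbz vbl
    using bzl nn_zero by simp
qed

end
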